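(* If $(A,S)$ is an arbitrary QP and $(C,T)$ is a trivial QP (on the same vertex set), then the canonical embedding $R\langle\langle A\rangle\rangle\to R\langle\langle A\oplus C\rangle\rangle$ induces an isomorphism of Jacobian algebras $\mathcal P(A,S)\to\mathcal P(A\oplus C,S+T)$.
   Context: Fix a field $K$; quiver with vertex set $Q_0$, $R=K^{Q_0}$, arrow span $A$ (an $R$-bimodule, $A_{i,j}=e_iAe_j$ spanned by arrows from $j$ to $i$). $R\langle\langle A\rangle\rangle=\prod_{d\ge0}A^d$ is the complete path algebra (possibly infinite linear combinations of paths) with the $\mathfrak m$-adic topology, $\mathfrak m=\prod_{d\ge1}A^d$. A potential is a possibly infinite linear combination of cyclic paths; cyclic equivalence: difference lies in the closure of the span of $a_1\cdots a_d-a_2\cdots a_da_1$. For $\xi\in A^\star$, $\partial_\xi(a_1\cdots a_d)=\sum_k\xi(a_k)a_{k+1}\cdots a_da_1\cdots a_{k-1}$. $J(S)$ is the closure of the two-sided ideal generated by all $\partial_\xi S$; $\mathcal P(A,S)=R\langle\langle A\rangle\rangle/J(S)$. A QP $(A,S)$: no loops ($A_{i,i}=0$) and no two cyclically equivalent cyclic paths in $S$. $(A,S)\oplus(C,T)=(A\oplus C,S+T)$, with $R\langle\langle A\rangle\rangle$ and $R\langle\langle C\rangle\rangle$ embedded as closed subalgebras of $R\langle\langle A\oplus C\rangle\rangle$. A QP $(C,T)$ is trivial if $T\in C^2$ and $\{\partial_\xi T:\xi\in C^\star\}=C$. *)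

theory Defs
  imports Main
begin

text \<open>An arrow a with src a = j and tgt a = i lies in A_{i,j} = e_i A e_j (an arrow from j to i).\<close>

record ('v, 'a) quiver =
  verts :: "'v set"
  arrs :: "'a set"
  src :: "'a \<Rightarrow> 'v"
  tgt :: "'a \<Rightarrow> 'v"

definition wf_quiver :: "('v, 'a) quiver \<Rightarrow> bool" where
  "wf_quiver Q \<longleftrightarrow> finite (verts Q) \<and> finite (arrs Q) \<and>
     (\<forall>a \<in> arrs Q. src Q a \<in> verts Q \<and> tgt Q a \<in> verts Q)"

definition composable :: "('v, 'a) quiver \<Rightarrow> 'a list \<Rightarrow> bool" where
  "composable Q w \<longleftrightarrow> (\<forall>k. Suc k < length w \<longrightarrow> src Q (w ! k) = tgt Q (w ! Suc k))"

text \<open>A path is a pair (i, w): for w = [] it is the idempotent e_i; for w nonempty it is the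
  path a1 ... ad, and i is then its target vertex tgt a1 (so the representation is unique).\<close>

definition valid_path :: "('v, 'a) quiver \<Rightarrow> 'v \<times> 'a list \<Rightarrow> bool" where
  "valid_path Q p \<longleftrightarrow> fst p \<in> verts Q \<and> set (snd p) \<subseteq> arrs Q \<and> composable Q (snd p) \<and>
     (snd p \<noteq> [] \<longrightarrow> fst p = tgt Q (hd (snd p)))"

definition at_path :: "('v, 'a) quiver \<Rightarrow> 'v \<Rightarrow> 'a list \<Rightarrow> 'v \<times> 'a list" where
  "at_path Q v w = (if w = [] then v else tgt Q (hd w), w)"

definition src_vertex :: "('v, 'a) quiver \<Rightarrow> 'v \<times> 'a list \<Rightarrow> 'v" where
  "src_vertex Q p = (if snd p = [] then fst p else src Q (last (snd p)))"

text \<open>The complete path algebra R<<A>>: arbitrary (possibly infinite) K-linear combinations of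
  paths, i.e. coefficient functions supported on valid paths.\<close>

definition palg :: "('v, 'a) quiver \<Rightarrow> ('v \<times> 'a list \<Rightarrow> 'k::field) set" where
  "palg Q = {f. \<forall>p. \<not> valid_path Q p \<longrightarrow> f p = 0}"

definition pmult :: "('v, 'a) quiver \<Rightarrow> ('v \<times> 'a list \<Rightarrow> 'k::field) \<Rightarrow> ('v \<times> 'a list \<Rightarrow> 'k)
    \<Rightarrow> ('v \<times> 'a list \<Rightarrow> 'k)" where
  "pmult Q f g p = (if valid_path Q p then
      (\<Sum>k \<in> {0..length (snd p)}.
         f (at_path Q (fst p) (take k (snd p))) * g (at_path Q (src_vertex Q p) (drop k (snd p))))
    else 0)"

definition pone :: "('v, 'a) quiver \<Rightarrow> ('v \<times> 'a list \<Rightarrow> 'k::field)" where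
  "pone Q p = (if fst p \<in> verts Q \<and> snd p = [] then 1 else 0)"

text \<open>The m-adic closure: f is in the closure of X iff for every d some g in X agrees with f
  modulo m^(d+1), i.e. on all paths of length at most d.\<close>

definition madic_closure :: "('v, 'a) quiver \<Rightarrow> ('v \<times> 'a list \<Rightarrow> 'k::field) set
    \<Rightarrow> ('v \<times> 'a list \<Rightarrow> 'k) set" where
  "madic_closure Q X = {f \<in> palg Q. \<forall>d. \<exists>g \<in> X.
      \<forall>p. valid_path Q p \<and> length (snd p) \<le> d \<longrightarrow> f p = g p}"

inductive_set ideal_gen :: "('v, 'a) quiver \<Rightarrow> ('v \<times> 'a list \<Rightarrow> 'k::field) set
    \<Rightarrow> ('v \<times> 'a list \<Rightarrow> 'k) set"
  for Q G where
  zero: "(\<lambda>p. 0) \<in> ideal_gen Q G"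
| gen: "g \<in> G \<Longrightarrow> u \<in> palg Q \<Longrightarrow> v \<in> palg Q \<Longrightarrow> pmult Q (pmult Q u g) v \<in> ideal_gen Q G"
| add: "x \<in> ideal_gen Q G \<Longrightarrow> y \<in> ideal_gen Q G \<Longrightarrow> (\<lambda>p. x p + y p) \<in> ideal_gen Q G"

definition cyclic_word :: "('v, 'a) quiver \<Rightarrow> 'a list \<Rightarrow> bool" where
  "cyclic_word Q w \<longleftrightarrow> w \<noteq> [] \<and> set w \<subseteq> arrs Q \<and> composable Q w \<and> tgt Q (hd w) = src Q (last w)"

definition potential :: "('v, 'a) quiver \<Rightarrow> ('v \<times> 'a list \<Rightarrow> 'k::field) \<Rightarrow> bool" where
  "potential Q S \<longleftrightarrow> S \<in> palg Q \<and> (\<forall>p. S p \<noteq> 0 \<longrightarrow> cyclic_word Q (snd p))"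

text \<open>Cyclic derivative with respect to xi in A^*, xi given by its values on the arrow basis:
  d_xi(a1...ad) = sum_k xi(a_k) a_(k+1)...a_d a_1...a_(k-1), extended continuously.
  The coefficient of the path (i,w) collects all cycles c = drop j w @ [a] @ take j w.\<close>

definition cyc_deriv :: "('v, 'a) quiver \<Rightarrow> ('a \<Rightarrow> 'k::field) \<Rightarrow> ('v \<times> 'a list \<Rightarrow> 'k)
    \<Rightarrow> ('v \<times> 'a list \<Rightarrow> 'k)" where
  "cyc_deriv Q \<xi> S p = (if valid_path Q p then
      (\<Sum>j \<in> {0..length (snd p)}. \<Sum>a \<in> arrs Q.
         (if snd p = [] \<and> tgt Q a \<noteq> fst p then 0
          else \<xi> a * S (at_path Q (fst p) (drop j (snd p) @ [a] @ take j (snd p)))))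
    else 0)"

definition jacobian_ideal :: "('v, 'a) quiver \<Rightarrow> ('v \<times> 'a list \<Rightarrow> 'k::field)
    \<Rightarrow> ('v \<times> 'a list \<Rightarrow> 'k) set" where
  "jacobian_ideal Q S = madic_closure Q (ideal_gen Q {cyc_deriv Q \<xi> S | \<xi>. True})"

definition is_QP :: "('v, 'a) quiver \<Rightarrow> ('v \<times> 'a list \<Rightarrow> 'k::field) \<Rightarrow> bool" where
  "is_QP Q S \<longleftrightarrow> wf_quiver Q \<and> (\<forall>a \<in> arrs Q. src Q a \<noteq> tgt Q a) \<and> potential Q S \<and>
     (\<forall>p q. p \<noteq> q \<and> (\<exists>n. snd q = rotate n (snd p)) \<longrightarrow> S p = 0 \<or> S q = 0)"

definition homog :: "('v, 'a) quiver \<Rightarrow> nat \<Rightarrow> ('v \<times> 'a list \<Rightarrow> 'k::field) set" where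
  "homog Q d = {f \<in> palg Q. \<forall>p. f p \<noteq> 0 \<longrightarrow> length (snd p) = d}"

definition trivial_QP :: "('v, 'a) quiver \<Rightarrow> ('v \<times> 'a list \<Rightarrow> 'k::field) \<Rightarrow> bool" where
  "trivial_QP Q T \<longleftrightarrow> is_QP Q T \<and> T \<in> homog Q 2 \<and>
     {cyc_deriv Q \<xi> T | \<xi>. True} = homog Q 1"

text \<open>Direct sum of the arrow spans over the same vertex set: disjoint union of arrows.\<close>
definition qsum :: "('v, 'a) quiver \<Rightarrow> ('v, 'c) quiver \<Rightarrow> ('v, 'a + 'c) quiver" where
  "qsum QA QC = \<lparr> verts = verts QA, arrs = Inl ` arrs QA \<union> Inr ` arrs QC,
      src = case_sum (src QA) (src QC), tgt = case_sum (tgt QA) (tgt QC) \<rparr>"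

definition emb_l :: "('v \<times> 'a list \<Rightarrow> 'k::field) \<Rightarrow> ('v \<times> ('a + 'c) list \<Rightarrow> 'k)" where
  "emb_l f p = (if set (snd p) \<subseteq> range Inl then f (fst p, map projl (snd p)) else 0)"

definition emb_r :: "('v \<times> 'c list \<Rightarrow> 'k::field) \<Rightarrow> ('v \<times> ('a + 'c) list \<Rightarrow> 'k)" where
  "emb_r f p = (if set (snd p) \<subseteq> range Inr then f (fst p, map projr (snd p)) else 0)"

end

theory Submission
  imports Defs
begin

lemma qsum_simps[simp]:
  "verts (qsum QA QC) = verts QA"
  "arrs (qsum QA QC) = Inl ` arrs QA \<union> Inr ` arrs QC"
  "src (qsum QA QC) (Inl a) = src QA a" "src (qsum QA QC) (Inr c) = src QC c"
  "tgt (qsum QA QC) (Inl a) = tgt QA a" "tgt (qsum QA QC) (Inr c) = tgt QC c"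
  by (simp_all add: qsum_def)

lemma composable_Inl[simp]: "composable (qsum QA QC) (map Inl w) = composable QA w"
  by (simp add: composable_def)
lemma composable_Inr[simp]: "composable (qsum QA QC) (map Inr w) = composable QC w"
  by (simp add: composable_def)

lemma valid_Inl[simp]: "valid_path (qsum QA QC) (v, map Inl w) = valid_path QA (v, w)"
  by (auto simp add: valid_path_def hd_map)
lemma valid_Inr[simp]: "verts QC = verts QA \<Longrightarrow> valid_path (qsum QA QC) (v, map Inr w) = valid_path QC (v, w)"
  by (auto simp add: valid_path_def hd_map)

lemma word_Inl_cases:
  obtains w' where "w = map Inl w'" | "\<not> set w \<subseteq> range Inl"
proof -
  have "set w \<subseteq> range Inl \<Longrightarrow> \<exists>w'. w = map Inl w'"
    by (induction w) (auto simp: Cons_eq_map_conv)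
  then show ?thesis using that by blast
qed

lemma word_Inr_cases:
  obtains w' where "w = map Inr w'" | "\<not> set w \<subseteq> range Inr"
proof -
  have "set w \<subseteq> range Inr \<Longrightarrow> \<exists>w'. w = map Inr w'"
    by (induction w) (auto simp: Cons_eq_map_conv)
  then show ?thesis using that by blast
qed

lemma emb_l_Inl[simp]: "emb_l f (v, map Inl w) = f (v, w)"
  by (simp add: emb_l_def image_subset_iff comp_def)
lemma emb_r_Inr[simp]: "emb_r f (v, map Inr w) = f (v, w)"
  by (simp add: emb_r_def image_subset_iff comp_def)

lemma at_path_Inl: "at_path (qsum QA QC) v (map Inl u) = (fst (at_path QA v u), map Inl u)"
  by (simp add: at_path_def hd_map)
lemma at_path_Inr: "at_path (qsum QA QC) v (map Inr u) = (fst (at_path QC v u), map Inr u)"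
  by (simp add: at_path_def hd_map)
lemma at_path_snd[simp]: "snd (at_path Q v u) = u"
  by (simp add: at_path_def)
lemma at_path_fst_eq: "at_path Q v u = (fst (at_path Q v u), u)"
  by (simp add: at_path_def)

lemma emb_l_at_Inl[simp]: "emb_l f (at_path (qsum QA QC) v (map Inl u)) = f (at_path QA v u)"
  by (subst at_path_Inl) (metis emb_l_Inl at_path_fst_eq)
lemma emb_r_at_Inr[simp]: "emb_r f (at_path (qsum QA QC) v (map Inr u)) = f (at_path QC v u)"
  by (subst at_path_Inr) (metis emb_r_Inr at_path_fst_eq)

lemma emb_l_notInl: "\<not> set (snd p) \<subseteq> range Inl \<Longrightarrow> emb_l f p = 0"
  by (simp add: emb_l_def)
lemma emb_r_notInr: "\<not> set (snd p) \<subseteq> range Inr \<Longrightarrow> emb_r f p = 0"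
  by (simp add: emb_r_def)

lemma src_vertex_Inl[simp]: "src_vertex (qsum QA QC) (v, map Inl w) = src_vertex QA (v, w)"
  by (simp add: src_vertex_def last_map)
lemma src_vertex_Inr[simp]: "src_vertex (qsum QA QC) (v, map Inr w) = src_vertex QC (v, w)"
  by (simp add: src_vertex_def last_map)


lemma emb_l_palg: "x \<in> palg QA \<Longrightarrow> emb_l x \<in> palg (qsum QA QC)"
  unfolding palg_def
proof (safe)
  fix v w assume x: "\<forall>p. \<not> valid_path QA p \<longrightarrow> x p = 0" and nv: "\<not> valid_path (qsum QA QC) (v, w)"
  show "emb_l x (v, w) = 0"
  proof (cases w rule: word_Inl_cases)
    case (1 w') then show ?thesis using x nv by simp
  next
    case 2 then show ?thesis by (simp add: emb_l_notInl)
  qed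
qed

definition proj_l :: "('v \<times> ('a + 'c) list \<Rightarrow> 'k::field) \<Rightarrow> ('v \<times> 'a list \<Rightarrow> 'k)" where
  "proj_l f p = f (fst p, map Inl (snd p))"

lemma proj_emb[simp]: "proj_l (emb_l x) = x"
  by (simp add: proj_l_def fun_eq_iff)

lemma proj_palg: "f \<in> palg (qsum QA QC) \<Longrightarrow> proj_l f \<in> palg QA"
  by (auto simp: palg_def proj_l_def)

lemma emb_pone: "emb_l (pone QA) = pone (qsum QA QC)"
proof
  fix p :: "'a \<times> ('b + 'c) list"
  obtain v w where p: "p = (v, w)" by fastforce
  show "emb_l (pone QA) p = pone (qsum QA QC) p"
  proof (cases w rule: word_Inl_cases)
    case (1 w') then show ?thesis by (simp add: p pone_def)
  next
    case 2 then show ?thesis by (auto simp: p pone_def emb_l_notInl)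
  qed
qed

lemma emb_pmult: "emb_l (pmult QA x y) = pmult (qsum QA QC) (emb_l x) (emb_l y)"
proof
  fix p :: "'a \<times> ('b + 'c) list"
  obtain v w where p: "p = (v, w)" by fastforce
  show "emb_l (pmult QA x y) p = pmult (qsum QA QC) (emb_l x) (emb_l y) p"
  proof (cases w rule: word_Inl_cases)
    case (1 w') then show ?thesis by (simp add: p pmult_def take_map drop_map)
  next
    case 2
    have h: "emb_l x (at_path (qsum QA QC) v (take k w)) * emb_l y (at_path (qsum QA QC) (src_vertex (qsum QA QC) (v, w)) (drop k w)) = 0" for k
    proof -
      have "\<not> set (take k w) \<subseteq> range Inl \<or> \<not> set (drop k w) \<subseteq> range Inl"
        using 2 by (metis append_take_drop_id set_append Un_subset_iff)
      then show ?thesis by (metis emb_l_notInl at_path_snd mult_zero_left mult_zero_right)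
    qed
    show ?thesis using 2 by (simp add: p pmult_def emb_l_notInl h)
  qed
qed

lemma proj_pmult: "proj_l (pmult (qsum QA QC) f g) = pmult QA (proj_l f) (proj_l g)"
proof
  fix p :: "'a \<times> 'b list"
  obtain v w where p: "p = (v, w)" by fastforce
  show "proj_l (pmult (qsum QA QC) f g) p = pmult QA (proj_l f) (proj_l g) p"
    by (simp add: p pmult_def proj_l_def take_map drop_map at_path_Inl)
qed


lemma proj_ideal:
  assumes "\<And>g. g \<in> G \<Longrightarrow> proj_l g \<in> G'"
  shows "f \<in> ideal_gen (qsum QA QC) G \<Longrightarrow> proj_l f \<in> ideal_gen QA G'"
proof (induction rule: ideal_gen.induct)
  case zero
  then show ?case using ideal_gen.zero by (simp add: proj_l_def)
next
  case (gen g u v)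
  then show ?case using ideal_gen.gen[of "proj_l g" G' "proj_l u" QA "proj_l v"] assms
    by (simp add: proj_pmult proj_palg)
next
  case (add x y)
  then show ?case using ideal_gen.add[OF add.IH]
    by (simp add: proj_l_def)
qed

lemma emb_ideal:
  assumes "\<And>g. g \<in> G \<Longrightarrow> emb_l g \<in> G'"
  shows "f \<in> ideal_gen QA G \<Longrightarrow> (emb_l f :: 'v \<times> ('a + 'c) list \<Rightarrow> 'k::field) \<in> ideal_gen (qsum QA (QC :: ('v,'c) quiver)) G'"
proof (induction rule: ideal_gen.induct)
  case zero
  then show ?case using ideal_gen.zero by (simp add: emb_l_def)
next
  case (gen g u v)
  then show ?case using ideal_gen.gen[of "emb_l g" G' "emb_l u" "qsum QA QC" "emb_l v"] assms
    by (simp add: emb_pmult[where QC=QC] emb_l_palg)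
next
  case (add x y)
  have "(emb_l (\<lambda>p. x p + y p) :: 'v \<times> ('a + 'c) list \<Rightarrow> 'k) = (\<lambda>p. emb_l x p + emb_l y p)"
    by (simp add: emb_l_def fun_eq_iff)
  then show ?case using ideal_gen.add[OF add.IH]
    by simp
qed

lemma proj_closure:
  assumes "\<And>g. g \<in> X \<Longrightarrow> proj_l g \<in> Y" and "f \<in> madic_closure (qsum QA QC) X"
  shows "proj_l f \<in> madic_closure QA Y"
  unfolding madic_closure_def
proof (safe)
  show "proj_l f \<in> palg QA" using assms(2) proj_palg by (auto simp: madic_closure_def)
  fix d
  obtain g where g: "g \<in> X" "\<forall>p. valid_path (qsum QA QC) p \<and> length (snd p) \<le> d \<longrightarrow> f p = g p"
    using assms(2) unfolding madic_closure_def by blast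
  show "\<exists>g\<in>Y. \<forall>p. valid_path QA p \<and> length (snd p) \<le> d \<longrightarrow> proj_l f p = g p"
  proof (intro bexI[of _ "proj_l g"] allI impI)
    fix p :: "'a \<times> 'b list" assume "valid_path QA p \<and> length (snd p) \<le> d"
    then show "proj_l f p = proj_l g p" using g(2)[rule_format, of "(fst p, map Inl (snd p))"]
      by (cases p) (simp add: proj_l_def)
  qed (use g assms in auto)
qed

lemma emb_closure:
  assumes "\<And>g. g \<in> X \<Longrightarrow> emb_l g \<in> Y" and "f \<in> madic_closure QA X"
  shows "(emb_l f :: 'v \<times> ('a + 'c) list \<Rightarrow> 'k::field) \<in> madic_closure (qsum QA (QC :: ('v,'c) quiver)) Y"
  unfolding madic_closure_def
proof (safe)
  show "emb_l f \<in> palg (qsum QA QC)" using assms(2) emb_l_palg by (auto simp: madic_closure_def)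
  fix d
  obtain g where g: "g \<in> X" "\<forall>p. valid_path QA p \<and> length (snd p) \<le> d \<longrightarrow> f p = g p"
    using assms(2) unfolding madic_closure_def by blast
  show "\<exists>g\<in>Y. \<forall>p. valid_path (qsum QA QC) p \<and> length (snd p) \<le> d \<longrightarrow> emb_l f p = g p"
  proof (intro bexI[of _ "emb_l g"] allI impI)
    fix p :: "'v \<times> ('a + 'c) list" assume h: "valid_path (qsum QA QC) p \<and> length (snd p) \<le> d"
    obtain v w where p: "p = (v, w)" by fastforce
    show "emb_l f p = emb_l g p"
    proof (cases w rule: word_Inl_cases)
      case (1 w') then show ?thesis using h g(2)[rule_format, of "(v, w')"] by (simp add: p)
    next
      case 2 then show ?thesis by (simp add: p emb_l_notInl)
    qed
  qed (use g assms in auto)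
qed


lemma sum_qsum_arrs:
  assumes "finite (arrs QA)" "finite (arrs QC)"
  shows "(\<Sum>a\<in>Inl ` arrs QA \<union> Inr ` arrs QC. f a) = (\<Sum>a\<in>arrs QA. f (Inl a)) + (\<Sum>c\<in>arrs QC. f (Inr c))"
proof -
  have "(\<Sum>a\<in>Inl ` arrs QA \<union> Inr ` arrs QC. f a) = (\<Sum>a\<in>Inl ` arrs QA. f a) + (\<Sum>a\<in>Inr ` arrs QC. f a)"
    using assms by (intro sum.union_disjoint) auto
  also have "\<dots> = (\<Sum>a\<in>arrs QA. f (Inl a)) + (\<Sum>c\<in>arrs QC. f (Inr c))"
    by (simp add: sum.reindex)
  finally show ?thesis .
qed

lemma homog2_single: assumes "T \<in> homog Q 2" shows "T (at_path Q v [c]) = 0"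
proof -
  from assms have "\<forall>p. T p \<noteq> 0 \<longrightarrow> length (snd p) = 2" by (simp add: homog_def)
  then have "T (tgt Q c, [c]) \<noteq> 0 \<longrightarrow> length [c] = 2" by (metis snd_conv)
  then show ?thesis by (simp add: at_path_def)
qed

lemma set_dat: "set (drop j w @ x # take j w) = insert x (set w)"
  by (metis Un_insert_right append_take_drop_id set_append set_simps(2) sup_commute Un_insert_left empty_set sup_bot.left_neutral)

lemma cyc_Inl:
  fixes S :: "'v \<times> 'a list \<Rightarrow> 'k::field" and T :: "'v \<times> 'c list \<Rightarrow> 'k"
  assumes fin: "finite (arrs QA)" "finite (arrs QC)" and hT: "T \<in> homog QC 2"
  shows "cyc_deriv (qsum QA QC) \<xi> (\<lambda>p. emb_l S p + emb_r T p) (v, map Inl w)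
       = cyc_deriv QA (\<xi> \<circ> Inl) S (v, w)"
proof (cases "valid_path QA (v, w)")
  case False then show ?thesis by (simp add: cyc_deriv_def)
next
  case True
  let ?F = "\<lambda>p. emb_l S p + emb_r T p"
  have eqL: "?F (at_path (qsum QA QC) v (drop j (map Inl w) @ Inl a # take j (map Inl w)))
      = S (at_path QA v (drop j w @ a # take j w))" for j a
  proof -
    have e: "drop j (map Inl w) @ Inl a # take j (map Inl w) = map Inl (drop j w @ a # take j w)"
      by (simp add: drop_map take_map)
    have "emb_r T (at_path (qsum QA QC) v (map Inl (drop j w @ a # take j w))) = 0"
      by (rule emb_r_notInr) auto
    then show ?thesis unfolding e by (simp only: emb_l_at_Inl) simp
  qed
  have eqR: "?F (at_path (qsum QA QC) v (drop j (map Inl w) @ Inr c # take j (map Inl w))) = 0" for j c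
  proof -
    have l: "emb_l S (at_path (qsum QA QC) v (drop j (map Inl w) @ Inr c # take j (map Inl w))) = 0"
      by (rule emb_l_notInl) (simp only: at_path_snd append.simps set_dat, auto)
    show ?thesis
    proof (cases w)
      case Nil
      have "emb_r T (at_path (qsum QA QC) v (map Inr [c])) = 0"
        using homog2_single[OF hT] by (simp only: emb_r_at_Inr)
      then show ?thesis using l Nil by simp
    next
      case (Cons a w')
      have "emb_r T (at_path (qsum QA QC) v (drop j (map Inl w) @ Inr c # take j (map Inl w))) = 0"
        by (rule emb_r_notInr) (simp only: at_path_snd append.simps set_dat, auto simp: Cons)
      then show ?thesis using l by simp
    qed
  qed
  have h1: "cyc_deriv (qsum QA QC) \<xi> ?F (v, map Inl w) = sum (\<lambda>j. sum (\<lambda>a. (if w = [] \<and> tgt (qsum QA QC) a \<noteq> v then 0 else \<xi> a * ?F (at_path (qsum QA QC) v (drop j (map Inl w) @ [a] @ take j (map Inl w))))) (Inl ` arrs QA \<union> Inr ` arrs QC)) {0..length w}"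
    unfolding cyc_deriv_def valid_Inl qsum_simps fst_conv snd_conv length_map
    by (simp only: True if_True map_is_Nil_conv)
  have h2: "sum (\<lambda>j. sum (\<lambda>a. (if w = [] \<and> tgt (qsum QA QC) a \<noteq> v then 0 else \<xi> a * ?F (at_path (qsum QA QC) v (drop j (map Inl w) @ [a] @ take j (map Inl w))))) (Inl ` arrs QA \<union> Inr ` arrs QC)) {0..length w} = sum (\<lambda>j. sum (\<lambda>a. (if w = [] \<and> tgt QA a \<noteq> v then 0 else (\<xi> \<circ> Inl) a * S (at_path QA v (drop j w @ [a] @ take j w)))) (arrs QA)) {0..length w}"
    apply (intro sum.cong refl)
    apply (subst sum_qsum_arrs[OF fin])
    apply (simp only: eqL eqR append.simps mult_zero_right if_cancel sum.neutral_const add_0_right comp_apply qsum_simps)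
    done
  have h3: "sum (\<lambda>j. sum (\<lambda>a. (if w = [] \<and> tgt QA a \<noteq> v then 0 else (\<xi> \<circ> Inl) a * S (at_path QA v (drop j w @ [a] @ take j w)))) (arrs QA)) {0..length w} = cyc_deriv QA (\<xi> \<circ> Inl) S (v, w)"
    unfolding cyc_deriv_def fst_conv snd_conv by (simp only: True if_True)
  from h1 h2 h3 show ?thesis by simp
qed


lemma cyc_emb:
  fixes S :: "'v \<times> 'a list \<Rightarrow> 'k::field" and T :: "'v \<times> 'c list \<Rightarrow> 'k"
  assumes fin: "finite (arrs QA)" "finite (arrs QC)" and hT: "T \<in> homog QC 2"
  shows "emb_l (cyc_deriv QA \<xi> S) = cyc_deriv (qsum QA QC) (case_sum \<xi> (\<lambda>_. 0)) (\<lambda>p. emb_l S p + emb_r T p)"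
proof
  fix p :: "'v \<times> ('a + 'c) list"
  obtain v w where p: "p = (v, w)" by fastforce
  show "emb_l (cyc_deriv QA \<xi> S) p = cyc_deriv (qsum QA QC) (case_sum \<xi> (\<lambda>_. 0)) (\<lambda>p. emb_l S p + emb_r T p) p"
  proof (cases w rule: word_Inl_cases)
    case (1 w')
    have "(case_sum \<xi> (\<lambda>_. 0) :: 'a + 'c \<Rightarrow> 'k) \<circ> Inl = \<xi>" by (simp add: fun_eq_iff)
    then show ?thesis using cyc_Inl[OF fin hT, of "case_sum \<xi> (\<lambda>_. 0)" S v w'] by (simp add: p 1)
  next
    case 2
    have z: "case_sum \<xi> (\<lambda>_. 0) a * (emb_l S (at_path (qsum QA QC) v (drop j w @ [a] @ take j w))
       + emb_r T (at_path (qsum QA QC) v (drop j w @ [a] @ take j w))) = 0" for j a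
    proof (cases a)
      case (Inl x)
      have "emb_l S (at_path (qsum QA QC) v (drop j w @ [a] @ take j w)) = 0"
        by (rule emb_l_notInl) (use 2 in \<open>simp only: at_path_snd append.simps set_dat, auto\<close>)
      moreover have "emb_r T (at_path (qsum QA QC) v (drop j w @ [a] @ take j w)) = 0"
        by (rule emb_r_notInr) (simp only: at_path_snd append.simps set_dat, auto simp: Inl)
      ultimately show ?thesis by simp
    qed simp
    have "emb_l (cyc_deriv QA \<xi> S) p = 0" using 2 by (simp add: p emb_l_notInl)
    moreover have "cyc_deriv (qsum QA QC) (case_sum \<xi> (\<lambda>_. 0)) (\<lambda>p. emb_l S p + emb_r T p) p = 0"
      unfolding cyc_deriv_def p fst_conv snd_conv by (simp only: z if_cancel sum.neutral_const)
    ultimately show ?thesis by simp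
  qed
qed

lemma cyc_Cgen:
  fixes S :: "'v \<times> 'a list \<Rightarrow> 'k::field" and T :: "'v \<times> 'c list \<Rightarrow> 'k"
  assumes fin: "finite (arrs QA)" "finite (arrs QC)" and ve: "verts QC = verts QA"
  shows "cyc_deriv (qsum QA QC) (case_sum (\<lambda>_. 0) \<xi>) (\<lambda>p. emb_l S p + emb_r T p) = emb_r (cyc_deriv QC \<xi> T)"
proof
  fix p :: "'v \<times> ('a + 'c) list"
  obtain v w where p: "p = (v, w)" by fastforce
  let ?F = "\<lambda>p. emb_l S p + emb_r T p"
  let ?Q = "qsum QA QC"
  show "cyc_deriv ?Q (case_sum (\<lambda>_. 0) \<xi>) ?F p = emb_r (cyc_deriv QC \<xi> T) p"
  proof (cases w rule: word_Inr_cases)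
    case (1 w')
    show ?thesis
    proof (cases "valid_path QC (v, w')")
      case False then show ?thesis by (simp add: p 1 cyc_deriv_def ve)
    next
      case True
      have eqR: "?F (at_path ?Q v (drop j (map Inr w') @ Inr c # take j (map Inr w')))
          = T (at_path QC v (drop j w' @ c # take j w'))" for j c
      proof -
        have e: "drop j (map Inr w') @ Inr c # take j (map Inr w') = map Inr (drop j w' @ c # take j w')"
          by (simp add: drop_map take_map)
        have "emb_l S (at_path ?Q v (map Inr (drop j w' @ c # take j w'))) = 0"
          by (rule emb_l_notInl) auto
        then show ?thesis unfolding e by (simp only: emb_r_at_Inr) simp
      qed
      have h1: "cyc_deriv ?Q (case_sum (\<lambda>_. 0) \<xi>) ?F (v, map Inr w') = sum (\<lambda>j. sum (\<lambda>a. (if w' = [] \<and> tgt ?Q a \<noteq> v then 0 else case_sum (\<lambda>_. 0) \<xi> a * ?F (at_path ?Q v (drop j (map Inr w') @ [a] @ take j (map Inr w'))))) (Inl ` arrs QA \<union> Inr ` arrs QC)) {0..length w'}"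
        unfolding cyc_deriv_def valid_Inr[OF ve] qsum_simps fst_conv snd_conv length_map
        by (simp only: True if_True map_is_Nil_conv)
      have h2: "sum (\<lambda>j. sum (\<lambda>a. (if w' = [] \<and> tgt ?Q a \<noteq> v then 0 else case_sum (\<lambda>_. 0) \<xi> a * ?F (at_path ?Q v (drop j (map Inr w') @ [a] @ take j (map Inr w'))))) (Inl ` arrs QA \<union> Inr ` arrs QC)) {0..length w'}
         = sum (\<lambda>j. sum (\<lambda>c. (if w' = [] \<and> tgt QC c \<noteq> v then 0 else \<xi> c * T (at_path QC v (drop j w' @ [c] @ take j w')))) (arrs QC)) {0..length w'}"
        apply (intro sum.cong refl)
        apply (subst sum_qsum_arrs[OF fin])
        apply (simp only: eqR append.simps mult_zero_left if_cancel sum.neutral_const add_0_left sum.case qsum_simps)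
        done
      have h3: "sum (\<lambda>j. sum (\<lambda>c. (if w' = [] \<and> tgt QC c \<noteq> v then 0 else \<xi> c * T (at_path QC v (drop j w' @ [c] @ take j w')))) (arrs QC)) {0..length w'} = cyc_deriv QC \<xi> T (v, w')"
        unfolding cyc_deriv_def fst_conv snd_conv by (simp only: True if_True)
      from h1 h2 h3 show ?thesis by (simp add: p 1)
    qed
  next
    case 2
    have z: "case_sum (\<lambda>_. 0) \<xi> a * (emb_l S (at_path ?Q v (drop j w @ [a] @ take j w))
       + emb_r T (at_path ?Q v (drop j w @ [a] @ take j w))) = 0" for j a
    proof (cases a)
      case (Inr x)
      have "emb_r T (at_path ?Q v (drop j w @ [a] @ take j w)) = 0"
        by (rule emb_r_notInr) (use 2 in \<open>simp only: at_path_snd append.simps set_dat, auto\<close>)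
      moreover have "emb_l S (at_path ?Q v (drop j w @ [a] @ take j w)) = 0"
        by (rule emb_l_notInl) (simp only: at_path_snd append.simps set_dat, auto simp: Inr)
      ultimately show ?thesis by simp
    qed simp
    have "emb_r (cyc_deriv QC \<xi> T) p = 0" using 2 by (simp add: p emb_r_notInr)
    moreover have "cyc_deriv ?Q (case_sum (\<lambda>_. 0) \<xi>) ?F p = 0"
      unfolding cyc_deriv_def p fst_conv snd_conv by (simp only: z if_cancel sum.neutral_const)
    ultimately show ?thesis by simp
  qed
qed


lemma valid_take: "valid_path Q (v, w) \<Longrightarrow> valid_path Q (v, take k w)"
  unfolding valid_path_def composable_def
  by (auto simp: hd_take dest: in_set_takeD)

lemma valid_drop:
  assumes wf: "wf_quiver Q" and vp: "valid_path Q (v, w)"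
  shows "valid_path Q (at_path Q (src_vertex Q (v, take k w)) (drop k w))"
proof (cases "drop k w = []")
  case True
  have "src_vertex Q (v, take k w) \<in> verts Q"
  proof (cases "take k w = []")
    case True then show ?thesis using vp by (simp add: src_vertex_def valid_path_def)
  next
    case False
    then have "last (take k w) \<in> set w" by (meson in_set_takeD last_in_set)
    then show ?thesis using False vp wf by (auto simp: src_vertex_def valid_path_def wf_quiver_def)
  qed
  then show ?thesis using True by (simp add: at_path_def valid_path_def composable_def)
next
  case False
  have "hd (drop k w) \<in> set w" using False by (meson hd_in_set in_set_dropD)
  then have "tgt Q (hd (drop k w)) \<in> verts Q" using vp wf by (auto simp: valid_path_def wf_quiver_def)
  moreover have "set (drop k w) \<subseteq> arrs Q" using vp by (auto simp: valid_path_def dest: in_set_dropD)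
  moreover have "composable Q (drop k w)" using vp by (auto simp: valid_path_def composable_def)
  ultimately show ?thesis using False by (simp add: at_path_def valid_path_def)
qed

lemma pmult_delta:
  assumes vp: "valid_path Q (v, w)" and k: "k \<le> length w"
  shows "pmult Q (\<lambda>r. a * (if r = (v, take k w) then 1 else 0))
                 (\<lambda>r. if r = at_path Q (src_vertex Q (v, take k w)) (drop k w) then 1 else 0)
       = (\<lambda>r. a * (if r = (v, w) then 1 else 0))"
proof
  fix r :: "'a \<times> 'b list"
  obtain u x where r: "r = (u, x)" by fastforce
  let ?q2 = "at_path Q (src_vertex Q (v, take k w)) (drop k w)"
  show "pmult Q (\<lambda>r. a * (if r = (v, take k w) then 1 else 0)) (\<lambda>r. if r = ?q2 then 1 else 0) r
      = a * (if r = (v, w) then 1 else 0)"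
  proof (cases "valid_path Q r")
    case False
    then have "r \<noteq> (v, w)" using vp by auto
    then show ?thesis using False by (simp add: pmult_def)
  next
    case True
    have key: "(at_path Q u (take j x) = (v, take k w) \<and> at_path Q (src_vertex Q (u, x)) (drop j x) = ?q2)
        \<longleftrightarrow> (r = (v, w) \<and> j = k)" if j: "j \<le> length x" for j
    proof
      assume h: "at_path Q u (take j x) = (v, take k w) \<and> at_path Q (src_vertex Q (u, x)) (drop j x) = ?q2"
      have t: "take j x = take k w" using h by (metis at_path_snd snd_conv)
      have d: "drop j x = drop k w" using h by (metis at_path_snd)
      have xw: "x = w" using t d by (metis append_take_drop_id)
      have jk: "j = k" using t j k xw by (metis length_take min.absorb2)
      have "u = v"
      proof (cases "take j x = []")
        case True
        then show ?thesis using h by (simp add: at_path_def)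
      next
        case False
        then have "x \<noteq> []" by auto
        then have "u = tgt Q (hd x)" using \<open>valid_path Q r\<close> by (simp add: r valid_path_def)
        also have "\<dots> = tgt Q (hd (take j x))" using False by (simp add: hd_take)
        also have "\<dots> = v"
        proof -
          have "fst (at_path Q u (take j x)) = v" using h by simp
          then show ?thesis unfolding at_path_def if_not_P[OF False] by simp
        qed
        finally show ?thesis .
      qed
      then show "r = (v, w) \<and> j = k" using xw jk r by simp
    next
      assume h: "r = (v, w) \<and> j = k"
      then have ux: "u = v" "x = w" "j = k" using r by auto
      have 1: "at_path Q v (take k w) = (v, take k w)"
      proof (cases "take k w = []")
        case False
        then have "w \<noteq> []" by auto
        then show ?thesis using False vp by (simp add: at_path_def hd_take valid_path_def)
      qed (simp add: at_path_def)
      have 2: "at_path Q (src_vertex Q (v, w)) (drop k w) = ?q2"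
      proof (cases "drop k w = []")
        case True
        then have "take k w = w" by simp
        then show ?thesis by simp
      qed (simp add: at_path_def)
      show "at_path Q u (take j x) = (v, take k w) \<and> at_path Q (src_vertex Q (u, x)) (drop j x) = ?q2"
        using 1 2 ux by simp
    qed
    have "pmult Q (\<lambda>r. a * (if r = (v, take k w) then 1 else 0)) (\<lambda>r. if r = ?q2 then 1 else 0) r
        = (\<Sum>j\<in>{0..length x}. (if r = (v, w) \<and> j = k then a else 0))"
    proof -
      have tm: "a * (if at_path Q u (take j x) = (v, take k w) then 1 else 0)
          * (if at_path Q (src_vertex Q (u, x)) (drop j x) = ?q2 then 1 else 0)
          = (if r = (v, w) \<and> j = k then a else 0)" if "j \<in> {0..length x}" for j
      proof -
        have "a * (if at_path Q u (take j x) = (v, take k w) then 1 else 0)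
          * (if at_path Q (src_vertex Q (u, x)) (drop j x) = ?q2 then 1 else 0)
          = (if at_path Q u (take j x) = (v, take k w) \<and> at_path Q (src_vertex Q (u, x)) (drop j x) = ?q2 then a else 0)"
          by simp
        also have "\<dots> = (if r = (v, w) \<and> j = k then a else 0)"
          using key[of j] that by simp
        finally show ?thesis .
      qed
      have tr: "valid_path Q (u, x)" using True r by simp
      show ?thesis
        unfolding pmult_def r fst_conv snd_conv if_P[OF tr]
        using tm r by (intro sum.cong) auto
    qed
    also have "\<dots> = a * (if r = (v, w) then 1 else 0)"
      using k r by (auto simp: sum.delta)
    finally show ?thesis .
  qed
qed


lemma ideal_sum:
  assumes "finite P" "\<And>p. p \<in> P \<Longrightarrow> f p \<in> ideal_gen Q G"
  shows "(\<lambda>r. \<Sum>p\<in>P. f p r) \<in> ideal_gen Q G"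
  using assms
proof (induction P rule: finite_induct)
  case empty
  then show ?case using ideal_gen.zero by simp
next
  case (insert x F)
  then have "(\<lambda>r. f x r + (\<Sum>p\<in>F. f p r)) \<in> ideal_gen Q G"
    by (intro ideal_gen.add) auto
  then show ?case using insert by simp
qed

lemma wf_qsum:
  assumes "wf_quiver QA" "wf_quiver QC" "verts QC = verts QA"
  shows "wf_quiver (qsum QA QC)"
  using assms by (auto simp: wf_quiver_def)

lemma delta_palg: "valid_path Q q \<Longrightarrow> (\<lambda>r. a * (if r = q then 1 else 0)) \<in> palg Q"
  by (auto simp: palg_def)

lemma delta_palg1: "valid_path Q q \<Longrightarrow> (\<lambda>r. if r = q then 1 else 0) \<in> palg Q"
  by (auto simp: palg_def)

lemma Egen:
  fixes S :: "'v \<times> 'a list \<Rightarrow> 'k::field" and T :: "'v \<times> 'c list \<Rightarrow> 'k"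
  assumes fin: "finite (arrs QA)" "finite (arrs QC)" and ve: "verts QC = verts QA"
    and wfC: "wf_quiver QC" and triv: "{cyc_deriv QC \<xi> T | \<xi>. True} = homog QC 1"
    and c: "c \<in> arrs QC"
  shows "(\<lambda>r. if r = (tgt QC c, [Inr c]) then 1 else (0::'k))
     \<in> {cyc_deriv (qsum QA QC) \<xi> (\<lambda>p. emb_l S p + emb_r T p) | \<xi>. True}"
proof -
  let ?d = "\<lambda>r. if r = (tgt QC c, [c]) then 1 else (0::'k)"
  have vc: "valid_path QC (tgt QC c, [c])"
    using c wfC by (auto simp: valid_path_def composable_def wf_quiver_def)
  have "?d \<in> homog QC 1"
    using vc by (auto simp: homog_def palg_def)
  then have "?d \<in> {cyc_deriv QC \<xi> T | \<xi>. True}" by (simp only: triv)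
  then obtain \<xi> where xi: "cyc_deriv QC \<xi> T = ?d" by auto
  have "(emb_r ?d :: 'v \<times> ('a + 'c) list \<Rightarrow> 'k) = (\<lambda>r. if r = (tgt QC c, [Inr c]) then 1 else (0::'k))"
  proof
    fix r :: "'v \<times> ('a + 'c) list"
    obtain v w where r: "r = (v, w)" by fastforce
    show "emb_r ?d r = (if r = (tgt QC c, [Inr c]) then 1 else 0)"
    proof (cases w rule: word_Inr_cases)
      case (1 w')
      then show ?thesis by (auto simp: r)
    next
      case 2
      then show ?thesis by (auto simp: r emb_r_notInr)
    qed
  qed
  then have "cyc_deriv (qsum QA QC) (case_sum (\<lambda>_. 0) \<xi>) (\<lambda>p. emb_l S p + emb_r T p)
      = (\<lambda>r. if r = (tgt QC c, [Inr c]) then 1 else (0::'k))"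
    using cyc_Cgen[OF fin ve, of \<xi> S T] xi by simp
  then show ?thesis by (intro CollectI exI[where x = "case_sum (\<lambda>_. 0) \<xi>"]) simp
qed


lemma path_gen:
  fixes S :: "'v \<times> 'a list \<Rightarrow> 'k::field" and T :: "'v \<times> 'c list \<Rightarrow> 'k"
  assumes fin: "finite (arrs QA)" "finite (arrs QC)" and ve: "verts QC = verts QA"
    and wfC: "wf_quiver QC" and wfB: "wf_quiver (qsum QA QC)"
    and triv: "{cyc_deriv QC \<xi> T | \<xi>. True} = homog QC 1"
    and vp: "valid_path (qsum QA QC) (v, w)" and nI: "\<not> set w \<subseteq> range Inl"
  shows "(\<lambda>r. a * (if r = (v, w) then 1 else 0))
     \<in> ideal_gen (qsum QA QC) {cyc_deriv (qsum QA QC) \<xi> (\<lambda>p. emb_l S p + emb_r T p) | \<xi>. True}"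
proof -
  let ?Q = "qsum QA QC"
  obtain y where y: "y \<in> set w" "y \<notin> range Inl" using nI by blast
  obtain c where yc: "y = Inr c" using y(2) by (metis rangeI sum.exhaust)
  obtain w1 w2 where w: "w = w1 @ Inr c # w2" using y yc by (metis split_list)
  have c: "c \<in> arrs QC" using vp y yc by (auto simp: valid_path_def)
  have tk: "take (Suc (length w1)) w = w1 @ [Inr c]" and dr: "drop (Suc (length w1)) w = w2"
    by (simp_all add: w)
  let ?q2 = "at_path ?Q (src_vertex ?Q (v, w1 @ [Inr c])) w2"
  have e1: "pmult ?Q (\<lambda>r. a * (if r = (v, w1 @ [Inr c]) then 1 else 0)) (\<lambda>r. if r = ?q2 then 1 else 0)
      = (\<lambda>r. a * (if r = (v, w) then 1 else 0))"
    using pmult_delta[OF vp, of "Suc (length w1)" a] unfolding tk dr by (simp add: w)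
  have vp': "valid_path ?Q (v, w1 @ [Inr c])" using valid_take[OF vp, of "Suc (length w1)"] unfolding tk .
  have e2: "pmult ?Q (\<lambda>r. a * (if r = (v, w1) then 1 else 0)) (\<lambda>r. if r = (tgt QC c, [Inr c]) then 1 else 0)
      = (\<lambda>r. a * (if r = (v, w1 @ [Inr c]) then 1 else 0))"
    using pmult_delta[OF vp', of "length w1" a] by (simp add: at_path_def)
  have vp1: "valid_path ?Q (v, w1)" using valid_take[OF vp', of "length w1"] by simp
  have vp2: "valid_path ?Q ?q2" using valid_drop[OF wfB vp, of "Suc (length w1)"] unfolding tk dr .
  have g: "(\<lambda>r. if r = (tgt QC c, [Inr c]) then 1 else (0::'k))
     \<in> {cyc_deriv (qsum QA QC) \<xi> (\<lambda>p. emb_l S p + emb_r T p) | \<xi>. True}"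
    by (rule Egen[OF fin ve wfC triv c])
  have "pmult ?Q (pmult ?Q (\<lambda>r. a * (if r = (v, w1) then 1 else 0)) (\<lambda>r. if r = (tgt QC c, [Inr c]) then 1 else 0))
      (\<lambda>r. if r = ?q2 then 1 else 0) \<in> ideal_gen (qsum QA QC) {cyc_deriv (qsum QA QC) \<xi> (\<lambda>p. emb_l S p + emb_r T p) | \<xi>. True}"
    by (rule ideal_gen.gen[OF g delta_palg[OF vp1] delta_palg1[OF vp2]])
  then show ?thesis unfolding e2 e1 .
qed


theorem proposition4p5:
  fixes QA :: "('v, 'a) quiver" and QC :: "('v, 'c) quiver"
    and S :: "'v \<times> 'a list \<Rightarrow> 'k::field" and T :: "'v \<times> 'c list \<Rightarrow> 'k"
  assumes "verts QC = verts QA"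
    and "is_QP QA S"
    and "trivial_QP QC T"
  shows "(\<forall>x \<in> palg QA. (emb_l (x :: 'v \<times> 'a list \<Rightarrow> 'k) :: 'v \<times> ('a + 'c) list \<Rightarrow> 'k) \<in> palg (qsum QA QC))
    \<and> (emb_l (pone QA :: 'v \<times> 'a list \<Rightarrow> 'k) :: 'v \<times> ('a + 'c) list \<Rightarrow> 'k) = pone (qsum QA QC)
    \<and> (\<forall>(x :: 'v \<times> 'a list \<Rightarrow> 'k) \<in> palg QA. \<forall>y \<in> palg QA.
          emb_l (pmult QA x y) = pmult (qsum QA QC) (emb_l x) (emb_l y)
        \<and> (emb_l (\<lambda>p. x p + y p) :: 'v \<times> ('a + 'c) list \<Rightarrow> 'k) = (\<lambda>p. emb_l x p + emb_l y p))
    \<and> (\<forall>c. \<forall>(x :: 'v \<times> 'a list \<Rightarrow> 'k) \<in> palg QA. (emb_l (\<lambda>p. c * x p) :: 'v \<times> ('a + 'c) list \<Rightarrow> 'k) = (\<lambda>p. c * emb_l x p))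
    \<and> (\<forall>x \<in> palg QA. emb_l x \<in> jacobian_ideal (qsum QA QC) (\<lambda>p. emb_l S p + emb_r T p)
          \<longleftrightarrow> x \<in> jacobian_ideal QA S)
    \<and> (\<forall>y \<in> palg (qsum QA QC). \<exists>x \<in> palg QA.
          (\<lambda>p. y p - emb_l x p) \<in> jacobian_ideal (qsum QA QC) (\<lambda>p. emb_l S p + emb_r T p))"
proof -
  let ?Q = "qsum QA QC"
  let ?F = "\<lambda>p. emb_l S p + emb_r T p"
  let ?GA = "{cyc_deriv QA \<xi> S | \<xi>. True}"
  let ?GB = "{cyc_deriv ?Q \<xi> ?F | \<xi>. True}"
  have wfA: "wf_quiver QA" using assms(2) by (simp add: is_QP_def)
  have wfC: "wf_quiver QC" using assms(3) by (simp add: trivial_QP_def is_QP_def)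
  have fin: "finite (arrs QA)" "finite (arrs QC)" using wfA wfC by (simp_all add: wf_quiver_def)
  have hT: "T \<in> homog QC 2" and triv: "{cyc_deriv QC \<xi> T | \<xi>. True} = homog QC 1"
    using assms(3) by (simp_all add: trivial_QP_def)
  have wfB: "wf_quiver ?Q" using wf_qsum[OF wfA wfC assms(1)] .
  have c1: "\<forall>x \<in> palg QA. (emb_l x :: 'v \<times> ('a + 'c) list \<Rightarrow> 'k) \<in> palg ?Q"
    using emb_l_palg by blast
  have c2: "(emb_l (pone QA :: 'v \<times> 'a list \<Rightarrow> 'k) :: 'v \<times> ('a + 'c) list \<Rightarrow> 'k) = pone ?Q"
    by (rule emb_pone)
  have c3: "\<forall>(x :: 'v \<times> 'a list \<Rightarrow> 'k) \<in> palg QA. \<forall>y \<in> palg QA.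
          emb_l (pmult QA x y) = pmult ?Q (emb_l x) (emb_l y)
        \<and> (emb_l (\<lambda>p. x p + y p) :: 'v \<times> ('a + 'c) list \<Rightarrow> 'k) = (\<lambda>p. emb_l x p + emb_l y p)"
  proof (intro ballI conjI)
    fix x y :: "'v \<times> 'a list \<Rightarrow> 'k"
    show "emb_l (pmult QA x y) = pmult ?Q (emb_l x) (emb_l y)" by (rule emb_pmult)
    show "(emb_l (\<lambda>p. x p + y p) :: 'v \<times> ('a + 'c) list \<Rightarrow> 'k) = (\<lambda>p. emb_l x p + emb_l y p)"
      by (simp add: fun_eq_iff emb_l_def)
  qed
  have c4: "\<forall>c. \<forall>(x :: 'v \<times> 'a list \<Rightarrow> 'k) \<in> palg QA. (emb_l (\<lambda>p. c * x p) :: 'v \<times> ('a + 'c) list \<Rightarrow> 'k) = (\<lambda>p. c * emb_l x p)"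
    by (simp add: fun_eq_iff emb_l_def)
  have genB: "\<And>g. g \<in> ?GA \<Longrightarrow> (emb_l g :: 'v \<times> ('a + 'c) list \<Rightarrow> 'k) \<in> ?GB"
  proof -
    fix g assume "g \<in> ?GA"
    then obtain \<xi> where g: "g = cyc_deriv QA \<xi> S" by blast
    show "emb_l g \<in> ?GB" unfolding g cyc_emb[OF fin hT] by blast
  qed
  have genA: "\<And>g. g \<in> ?GB \<Longrightarrow> proj_l g \<in> ?GA"
  proof -
    fix g assume "g \<in> ?GB"
    then obtain \<xi> where g: "g = cyc_deriv ?Q \<xi> ?F" by blast
    have "proj_l g = cyc_deriv QA (\<xi> \<circ> Inl) S"
      unfolding g proj_l_def fun_eq_iff using cyc_Inl[OF fin hT, of \<xi> S] by simp
    then show "proj_l g \<in> ?GA" by blast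
  qed
  have c5: "\<forall>x \<in> palg QA. emb_l x \<in> jacobian_ideal ?Q ?F \<longleftrightarrow> x \<in> jacobian_ideal QA S"
  proof (intro ballI iffI)
    fix x :: "'v \<times> 'a list \<Rightarrow> 'k"
    assume "emb_l x \<in> jacobian_ideal ?Q ?F"
    then have "proj_l (emb_l x :: 'v \<times> ('a + 'c) list \<Rightarrow> 'k) \<in> jacobian_ideal QA S"
      unfolding jacobian_ideal_def
      by (rule proj_closure[rotated]) (rule proj_ideal[OF genA])
    then show "x \<in> jacobian_ideal QA S" by simp
  next
    fix x :: "'v \<times> 'a list \<Rightarrow> 'k"
    assume "x \<in> jacobian_ideal QA S"
    then show "emb_l x \<in> jacobian_ideal ?Q ?F"
      unfolding jacobian_ideal_def
      by (rule emb_closure[rotated]) (rule emb_ideal[OF genB])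
  qed
  have c6: "\<forall>y \<in> palg ?Q. \<exists>x \<in> palg QA. (\<lambda>p. y p - emb_l x p) \<in> jacobian_ideal ?Q ?F"
  proof
    fix y :: "'v \<times> ('a + 'c) list \<Rightarrow> 'k"
    assume y: "y \<in> palg ?Q"
    let ?z = "\<lambda>p. y p - emb_l (proj_l y) p"
    have px: "proj_l y \<in> palg QA" using proj_palg[OF y] .
    have zp: "?z \<in> palg ?Q" using y emb_l_palg[OF px, where QC = QC] by (auto simp: palg_def)
    have zI: "?z (v, map Inl w) = 0" for v w by (simp add: proj_l_def)
    have "?z \<in> madic_closure ?Q (ideal_gen ?Q ?GB)"
      unfolding madic_closure_def
    proof (intro CollectI conjI zp allI)
      fix d
      let ?P = "{p. valid_path ?Q p \<and> length (snd p) \<le> d \<and> \<not> set (snd p) \<subseteq> range Inl}"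
      have finP: "finite ?P"
      proof (rule finite_subset)
        show "?P \<subseteq> verts QA \<times> {w. set w \<subseteq> arrs ?Q \<and> length w \<le> d}"
          by (auto simp: valid_path_def)
        show "finite (verts QA \<times> {w. set w \<subseteq> arrs ?Q \<and> length w \<le> d})"
          using wfA wfB by (intro finite_cartesian_product finite_lists_length_le) (simp_all add: wf_quiver_def)
      qed
      let ?g = "\<lambda>r. \<Sum>p\<in>?P. ?z p * (if r = p then 1 else 0)"
      have gI: "?g \<in> ideal_gen ?Q ?GB"
      proof (rule ideal_sum[OF finP])
        fix p assume "p \<in> ?P"
        then obtain v w where p: "p = (v, w)" "valid_path ?Q (v, w)" "\<not> set w \<subseteq> range Inl"
          by (cases p) auto
        show "(\<lambda>r. ?z p * (if r = p then 1 else 0)) \<in> ideal_gen ?Q ?GB"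
          unfolding p(1) by (rule path_gen[OF fin assms(1) wfC wfB triv p(2,3)])
      qed
      have agree: "\<forall>p. valid_path ?Q p \<and> length (snd p) \<le> d \<longrightarrow> ?z p = ?g p"
      proof (intro allI impI)
        fix p assume h: "valid_path ?Q p \<and> length (snd p) \<le> d"
        have "?g p = (if p \<in> ?P then ?z p else 0)"
          using finP by (simp add: sum.delta' if_distrib cong: if_cong)
        moreover have "p \<notin> ?P \<Longrightarrow> ?z p = 0"
        proof -
          assume "p \<notin> ?P"
          then have "set (snd p) \<subseteq> range Inl" using h by blast
          then obtain w' where "snd p = map Inl w'" by (metis word_Inl_cases)
          then show "?z p = 0" using zI[of "fst p" w'] by (metis prod.collapse)
        qed
        ultimately show "?z p = ?g p" by auto
      qed
      show "\<exists>g \<in> ideal_gen ?Q ?GB. \<forall>p. valid_path ?Q p \<and> length (snd p) \<le> d \<longrightarrow> ?z p = g p"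
      proof (rule bexI[where x = "?g"])
        show "\<forall>p. valid_path ?Q p \<and> length (snd p) \<le> d \<longrightarrow> ?z p = ?g p" by (rule agree)
      qed (rule gI)
    qed
    then show "\<exists>x \<in> palg QA. (\<lambda>p. y p - emb_l x p) \<in> jacobian_ideal ?Q ?F"
      using px unfolding jacobian_ideal_def by blast
  qed
  show ?thesis by (intro conjI c1 c2 c3 c4 c5 c6)
qed

end
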